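(* Let $\mathbf g:\mathbb{R}^{d_{\mathrm{input}}}\to\mathbb{R}^M$ be an $\ell_\infty$-dist net (as defined in the context) and let $f(\mathbf x)=\arg\max_{i\in\{1,\dots,M\}} g_i(\mathbf x)$. Let $(\mathbf x,y)$ be such that $\mathbf x$ is correctly classified, i.e. $f(\mathbf x)=y$, and let $\mathrm{margin}(\mathbf x;\mathbf g)$ denote the difference between the largest and the second-largest entries of $\mathbf g(\mathbf x)$. Then for every $\mathbf x'$ with $\|\mathbf x-\mathbf x'\|_\infty<\mathrm{margin}(\mathbf x;\mathbf g)/2$ we have $f(\mathbf x')=f(\mathbf x)$. Consequently the robust radius satisfies $R(f;\mathbf x,y)\ge \mathrm{margin}(\mathbf x;\mathbf g)/2$, i.e. $\mathrm{margin}(\mathbf x;\mathbf g)/2$ is a valid certified radius at $(\mathbf x,y)$.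
   Context: An $L$-layer $\ell_\infty$-dist net takes $\mathbf x^{(0)}=\mathbf x\in\mathbb{R}^{d_{\mathrm{input}}}$ and computes, for $1\le l\le L$, $1\le k\le d_l$, $x^{(l)}_k=\|\mathbf x^{(l-1)}-\mathbf w^{(l,k)}\|_\infty+b^{(l,k)}$ with arbitrary real parameters $\mathbf w^{(l,k)}$, $b^{(l,k)}$; with $d_L=M$ its output is $\mathbf g(\mathbf x)=(-x^{(L)}_1,\dots,-x^{(L)}_M)$. For a classifier $f$ and labeled point $(\mathbf x,y)$, the robust radius is $R(f;\mathbf x,y)=\inf_{f(\mathbf x')\ne f(\mathbf x)}\|\mathbf x'-\mathbf x\|_\infty$ if $f(\mathbf x)=y$ and $0$ otherwise; a certified radius is any lower bound on $R(f;\mathbf x,y)$. *)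

theory Defs
  imports Complex_Main "HOL-Library.Extended_Real"
begin

text \<open>Vectors in R^n are represented as functions nat => real that vanish at indices >= n.\<close>

definition vec_space :: "nat \<Rightarrow> (nat \<Rightarrow> real) set" where
  "vec_space n = {v. \<forall>i\<ge>n. v i = 0}"

definition linf_dist :: "nat \<Rightarrow> (nat \<Rightarrow> real) \<Rightarrow> (nat \<Rightarrow> real) \<Rightarrow> real" where
  "linf_dist n u v = Max (insert 0 ((\<lambda>i. \<bar>u i - v i\<bar>) ` {..<n}))"

text \<open>A layer is (output width d_l, weights k |-> w^(l,k), biases k |-> b^(l,k)).\<close>
type_synonym layer = "nat \<times> (nat \<Rightarrow> nat \<Rightarrow> real) \<times> (nat \<Rightarrow> real)"

text \<open>Forward pass: x^(l)_k = ||x^(l-1) - w^(l,k)||_inf + b^(l,k), for k < d_l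
  (coordinates >= d_l set to 0). First argument is the width of the current input.\<close>
fun dist_forward :: "nat \<Rightarrow> layer list \<Rightarrow> (nat \<Rightarrow> real) \<Rightarrow> (nat \<Rightarrow> real)" where
  "dist_forward d [] x = x"
| "dist_forward d ((k, W, b) # ls) x =
     dist_forward k ls (\<lambda>j. if j < k then linf_dist d x (W j) + b j else 0)"

definition dist_net :: "nat \<Rightarrow> layer list \<Rightarrow> (nat \<Rightarrow> real) \<Rightarrow> (nat \<Rightarrow> real)" where
  "dist_net d ls x = (\<lambda>i. - dist_forward d ls x i)"

definition is_dist_net :: "layer list \<Rightarrow> nat \<Rightarrow> bool" where
  "is_dist_net ls M \<longleftrightarrow> ls \<noteq> [] \<and> fst (last ls) = M"

text \<open>Margin of a vector v in R^M (M >= 2): largest entry minus second-largest entry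
  (the maximum over all indices other than one index attaining the maximum).\<close>
definition top_index :: "nat \<Rightarrow> (nat \<Rightarrow> real) \<Rightarrow> nat" where
  "top_index M v = (LEAST i. i < M \<and> (\<forall>j<M. v j \<le> v i))"

definition margin :: "nat \<Rightarrow> (nat \<Rightarrow> real) \<Rightarrow> real" where
  "margin M v = Max (v ` {..<M}) - Max (v ` ({..<M} - {top_index M v}))"

text \<open>Robust radius of classifier f at (x,y) in R^d (infimum over the empty set is +infinity).\<close>
definition robust_radius :: "nat \<Rightarrow> ((nat \<Rightarrow> real) \<Rightarrow> nat) \<Rightarrow> (nat \<Rightarrow> real) \<Rightarrow> nat \<Rightarrow> ereal" where
  "robust_radius d f x y =
     (if f x = y then (INF x' \<in> {x' \<in> vec_space d. f x' \<noteq> f x}. ereal (linf_dist d x' x)) else 0)"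

end

theory Submission
  imports Defs
begin

lemma linf_ge_abs:
  assumes "i < n" shows "\<bar>u i - v i\<bar> \<le> linf_dist n u v"
  unfolding linf_dist_def using assms by (intro Max_ge) auto

lemma linf_nonneg: "0 \<le> linf_dist n u v"
  unfolding linf_dist_def by (intro Max_ge) auto

lemma linf_le:
  assumes "\<And>i. i < n \<Longrightarrow> \<bar>u i - v i\<bar> \<le> c" and "0 \<le> c"
  shows "linf_dist n u v \<le> c"
  unfolding linf_dist_def using assms by (subst Max_le_iff) auto

lemma linf_self: "linf_dist n u u = 0"
  using linf_le[of n u u 0] linf_nonneg[of n u u] by simp

lemma linf_sym: "linf_dist n u v = linf_dist n v u"
  unfolding linf_dist_def by (simp add: abs_minus_commute)

lemma linf_tri: "linf_dist n u w \<le> linf_dist n u v + linf_dist n v w"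
proof (rule linf_le)
  fix i assume "i < n"
  have "\<bar>u i - w i\<bar> \<le> \<bar>u i - v i\<bar> + \<bar>v i - w i\<bar>" by linarith
  then show "\<bar>u i - w i\<bar> \<le> linf_dist n u v + linf_dist n v w"
    using linf_ge_abs[OF \<open>i < n\<close>, of u v] linf_ge_abs[OF \<open>i < n\<close>, of v w] by linarith
qed (use linf_nonneg[of n u v] linf_nonneg[of n v w] in linarith)

lemma linf_lip: "\<bar>linf_dist n u w - linf_dist n v w\<bar> \<le> linf_dist n u v"
  using linf_tri[of n u w v] linf_tri[of n v w u] linf_sym[of n u v] by linarith

lemma fwd_lip:
  "ls \<noteq> [] \<Longrightarrow> \<bar>dist_forward d ls x i - dist_forward d ls x' i\<bar> \<le> linf_dist d x x'"
proof (induction ls arbitrary: d x x' i)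
  case Nil then show ?case by simp
next
  case (Cons l ls)
  obtain k W b where l: "l = (k, W, b)" by (cases l) auto
  define u where "u = (\<lambda>j. if j < k then linf_dist d x (W j) + b j else 0)"
  define v where "v = (\<lambda>j. if j < k then linf_dist d x' (W j) + b j else 0)"
  have uv: "\<bar>u j - v j\<bar> \<le> linf_dist d x x'" for j
    using linf_lip[of d x "W j" x'] linf_nonneg[of d x x'] by (auto simp: u_def v_def)
  show ?case
  proof (cases "ls = []")
    case True
    then show ?thesis using uv by (simp add: l u_def[symmetric] v_def[symmetric])
  next
    case False
    have "\<bar>dist_forward k ls u i - dist_forward k ls v i\<bar> \<le> linf_dist k u v"
      using Cons.IH[OF False] .
    also have "\<dots> \<le> linf_dist d x x'" using uv linf_nonneg[of d x x'] by (intro linf_le) auto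
    finally show ?thesis by (simp add: l u_def[symmetric] v_def[symmetric])
  qed
qed

lemma net_lip:
  "ls \<noteq> [] \<Longrightarrow> \<bar>dist_net d ls x i - dist_net d ls x' i\<bar> \<le> linf_dist d x x'"
  using fwd_lip[of ls d x i x'] by (simp add: dist_net_def)

theorem fact2:
  fixes d M :: nat and ls :: "layer list" and f :: "(nat \<Rightarrow> real) \<Rightarrow> nat"
    and x :: "nat \<Rightarrow> real" and y :: nat
  assumes net: "is_dist_net ls M"
    and M2: "M \<ge> 2"
    and f_argmax: "\<forall>z. f z < M \<and> (\<forall>j<M. dist_net d ls z j \<le> dist_net d ls z (f z))"
    and x_in: "x \<in> vec_space d"
    and correct: "f x = y"
  shows "(\<forall>x' \<in> vec_space d. linf_dist d x x' < margin M (dist_net d ls x) / 2 \<longrightarrow> f x' = f x)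
       \<and> robust_radius d f x y \<ge> ereal (margin M (dist_net d ls x) / 2)"
proof -
  have ne: "ls \<noteq> []" using net by (simp add: is_dist_net_def)
  define g where "g = dist_net d ls x"
  define t where "t = top_index M g"
  define m where "m = margin M g"
  have ex: "\<exists>i. i < M \<and> (\<forall>j<M. g j \<le> g i)"
    using f_argmax g_def by blast
  have t: "t < M \<and> (\<forall>j<M. g j \<le> g t)"
    unfolding t_def top_index_def using LeastI_ex[OF ex] .
  have maxg: "Max (g ` {..<M}) = g t"
    using t by (intro Max_eqI) auto
  have oth: "g j \<le> g t - m" if "j < M" "j \<noteq> t" for j
  proof -
    have "g j \<le> Max (g ` ({..<M} - {t}))" using that by (intro Max_ge) auto
    then show ?thesis unfolding m_def margin_def maxg t_def[symmetric] by simp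
  qed
  have key: "f x' = t" if "linf_dist d x x' < m / 2" for x'
  proof (rule ccontr)
    assume ne': "f x' \<noteq> t"
    let ?g' = "dist_net d ls x'"
    have fx: "f x' < M" "?g' t \<le> ?g' (f x')" using f_argmax t by auto
    have "\<bar>g (f x') - ?g' (f x')\<bar> \<le> linf_dist d x x'" "\<bar>g t - ?g' t\<bar> \<le> linf_dist d x x'"
      using net_lip[OF ne] g_def by auto
    moreover have "g (f x') \<le> g t - m" using oth fx ne' by auto
    ultimately show False using fx that by linarith
  qed
  have A: "\<forall>x' \<in> vec_space d. linf_dist d x x' < m / 2 \<longrightarrow> f x' = f x"
  proof (intro ballI impI)
    fix x' assume "linf_dist d x x' < m / 2"
    moreover then have "linf_dist d x x < m / 2" using linf_nonneg[of d x x'] linf_self[of d x]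
      by simp
    ultimately show "f x' = f x" using key by metis
  qed
  have B: "robust_radius d f x y \<ge> ereal (m / 2)"
    unfolding robust_radius_def using correct
  proof (simp, intro INF_greatest)
    fix x' assume "x' \<in> {x' \<in> vec_space d. f x' \<noteq> y}"
    then have "\<not> linf_dist d x x' < m / 2" using A correct by auto
    then show "ereal (m / 2) \<le> ereal (linf_dist d x' x)" using linf_sym[of d x x'] by simp
  qed
  show ?thesis using A B unfolding m_def g_def by simp
qed

end
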